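(* Let $A\in\mathbb{R}^{m\times n}$, and let $p:[0,\infty)\to\mathbb{R}$ be concave, increasing and continuous with right derivative $p'(0+)>0$. For $x\in\mathbb{R}^n$ define $R(x)\in\mathbb{R}^n$ by $$R(x)_i=\mathrm{sgn}(x_i)\Big(1-\frac{d_i(x)}{p'(0+)}\Big),$$ where $d_i(x)=p'(0+)$ if $x_i=0$, and, if $x_i\neq0$, $d_i(x)$ is any element of the superdifferential $[p'_+(|x_i|),p'_-(|x_i|)]$ of the concave function $p$ at $|x_i|$ (one-sided derivatives). Given $\bar x\in\mathbb{R}^n$, consider the iteration $x^{(0)}=\mathbf{0}$ and $$x^{(k+1)}\in\arg\min_{x\in\mathbb{R}^n}\ \|x\|_1-\langle R(x^{(k)}),x\rangle\quad\text{s.t.}\quad Ax=A\bar x,\qquad k=0,1,2,\dots$$ Let $T\subseteq\{1,\dots,n\}$ be a fixed index set. Suppose that basis pursuit uniquely recovers every vector supported on $T$, i.e. for every $\bar x$ with $\{i:\bar x_i\neq0\}\subseteq T$, $\bar x$ is the unique solution of $\min_x\|x\|_1$ s.t. $Ax=A\bar x$. Then the iteration above also recovers every such $\bar x$: for every $\bar x$ supported on $T$ and every $k\ge 0$, the minimization problem defining $x^{(k+1)}$ has $\bar x$ as its unique solution, so $x^{(k)}=\bar x$ for all $k\ge1$.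
   Context: $\mathrm{sgn}(t)=t/|t|$ for $t\neq0$ and $\mathrm{sgn}(0)=0$. A vector is supported on $T$ if all its nonzero entries have indices in $T$. (When $x^{(0)}=\mathbf{0}$, $R(x^{(0)})=\mathbf{0}$, so the first step is basis pursuit.) *)

theory Defs
  imports "HOL-Analysis.Analysis"
begin

definition l1norm :: "real ^ 'n \<Rightarrow> real" where
  "l1norm x = (\<Sum>i\<in>UNIV. \<bar>x $ i\<bar>)"

definition right_deriv_is :: "(real \<Rightarrow> real) \<Rightarrow> real \<Rightarrow> real \<Rightarrow> bool" where
  "right_deriv_is p t dr \<longleftrightarrow> ((\<lambda>s. (p s - p t) / (s - t)) \<longlongrightarrow> dr) (at_right t)"

definition left_deriv_is :: "(real \<Rightarrow> real) \<Rightarrow> real \<Rightarrow> real \<Rightarrow> bool" where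
  "left_deriv_is p t dl \<longleftrightarrow> ((\<lambda>s. (p s - p t) / (s - t)) \<longlongrightarrow> dl) (at_left t)"

definition in_superdiff :: "(real \<Rightarrow> real) \<Rightarrow> real \<Rightarrow> real \<Rightarrow> bool" where
  "in_superdiff p t d \<longleftrightarrow>
     (\<exists>dr dl. right_deriv_is p t dr \<and> left_deriv_is p t dl \<and> dr \<le> d \<and> d \<le> dl)"

definition admissible_d :: "(real \<Rightarrow> real) \<Rightarrow> real \<Rightarrow> real ^ 'n \<Rightarrow> real ^ 'n \<Rightarrow> bool" where
  "admissible_d p dp0 x d \<longleftrightarrow>
     (\<forall>i. (x $ i = 0 \<longrightarrow> d $ i = dp0) \<and> (x $ i \<noteq> 0 \<longrightarrow> in_superdiff p \<bar>x $ i\<bar> (d $ i)))"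

definition Rvec :: "real \<Rightarrow> real ^ 'n \<Rightarrow> real ^ 'n \<Rightarrow> real ^ 'n" where
  "Rvec dp0 x d = (\<chi> i. sgn (x $ i) * (1 - d $ i / dp0))"

definition is_argmin :: "(real ^ 'n \<Rightarrow> real) \<Rightarrow> real ^ 'n ^ 'm \<Rightarrow> real ^ 'm \<Rightarrow> real ^ 'n \<Rightarrow> bool" where
  "is_argmin f A b z \<longleftrightarrow> A *v z = b \<and> (\<forall>x. A *v x = b \<longrightarrow> f z \<le> f x)"

definition is_unique_argmin :: "(real ^ 'n \<Rightarrow> real) \<Rightarrow> real ^ 'n ^ 'm \<Rightarrow> real ^ 'm \<Rightarrow> real ^ 'n \<Rightarrow> bool" where
  "is_unique_argmin f A b z \<longleftrightarrow> is_argmin f A b z \<and> (\<forall>x. is_argmin f A b x \<longrightarrow> x = z)"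

definition supported_on :: "real ^ 'n \<Rightarrow> 'n set \<Rightarrow> bool" where
  "supported_on x T \<longleftrightarrow> {i. x $ i \<noteq> 0} \<subseteq> T"

end

theory Submission
  imports Defs
begin

lemma negq: "(- (a::real) - - b) / (c - d) = - ((b - a) / (d - c))"
  by (metis minus_diff_eq minus_diff_minus minus_divide_right)

lemma swapq: "((a::real) - b) / (c - d) = (b - a) / (d - c)"
  by (metis minus_diff_eq minus_divide_divide)

lemma slope_conc:
  fixes p :: "real \<Rightarrow> real"
  assumes conc: "concave_on {0..} p" and "0 \<le> x" "x < t" "t < y"
  shows "(p y - p t) / (y - t) \<le> (p t - p x) / (t - x)"
    and "(p y - p x) / (y - x) \<le> (p t - p x) / (t - x)"
proof -
  have cv: "convex_on {0..} (\<lambda>z. - p z)" using conc by (simp add: concave_on_def)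
  have I: "x \<in> {0..}" "y \<in> {0..}" using assms by auto
  note a = convex_on_slope_le[OF cv I \<open>x<t\<close> \<open>t<y\<close>]
  have e1: "(- p x - - p t) / (x - t) = - ((p t - p x) / (t - x))" by (rule negq)
  have e2: "(- p x - - p y) / (x - y) = - ((p y - p x) / (y - x))" by (rule negq)
  have e3: "(- p t - - p y) / (t - y) = - ((p y - p t) / (y - t))" by (rule negq)
  show "(p y - p x) / (y - x) \<le> (p t - p x) / (t - x)" using a(1) e1 e2 by simp
  show "(p y - p t) / (y - t) \<le> (p t - p x) / (t - x)" using a e1 e2 e3 by simp
qed

lemma dbound:
  fixes p :: "real \<Rightarrow> real"
  assumes conc: "concave_on {0..} p" and incr: "mono_on {0..} p"
    and dp0: "right_deriv_is p 0 dp0" and t: "t > 0" and sd: "in_superdiff p t d"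
  shows "0 \<le> d \<and> d \<le> dp0"
proof -
  obtain dr dl where dr: "right_deriv_is p t dr" and dl: "left_deriv_is p t dl"
    and le: "dr \<le> d" "d \<le> dl" using sd by (auto simp: in_superdiff_def)
  have "0 \<le> dr"
  proof (rule tendsto_lowerbound)
    show "((\<lambda>s. (p s - p t) / (s - t)) \<longlongrightarrow> dr) (at_right t)"
      using dr by (simp add: right_deriv_is_def)
    show "\<forall>\<^sub>F s in at_right t. 0 \<le> (p s - p t) / (s - t)"
      unfolding eventually_at_right_less
    proof -
      have "\<forall>\<^sub>F s in at_right t. s > t" by (simp add: eventually_at_right_less)
      then show "\<forall>\<^sub>F s in at_right t. 0 \<le> (p s - p t) / (s - t)"
      proof (rule eventually_mono)
        fix s assume "s > t"
        then have "p t \<le> p s" using incr t by (auto intro: mono_onD)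
        then show "0 \<le> (p s - p t) / (s - t)" using \<open>s>t\<close> by simp
      qed
    qed
    show "\<not> trivial_limit (at_right t)" by simp
  qed
  have sl: "(p s - p 0) / (s - 0) \<le> dp0" if "s > 0" for s
  proof (rule tendsto_lowerbound)
    show "((\<lambda>u. (p u - p 0) / (u - 0)) \<longlongrightarrow> dp0) (at_right 0)"
      using dp0 by (simp add: right_deriv_is_def)
    show "\<forall>\<^sub>F u in at_right 0. (p s - p 0) / (s - 0) \<le> (p u - p 0) / (u - 0)"
      using eventually_at_right_real[OF that]
    proof (rule eventually_mono)
      fix u assume "u \<in> {0<..<s}"
      then show "(p s - p 0) / (s - 0) \<le> (p u - p 0) / (u - 0)"
        using slope_conc(2)[OF conc, of 0 u s] by auto
    qed
    show "\<not> trivial_limit (at_right (0::real))" by simp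
  qed
  have "dl \<le> dp0"
  proof (rule tendsto_upperbound)
    show "((\<lambda>s. (p s - p t) / (s - t)) \<longlongrightarrow> dl) (at_left t)"
      using dl by (simp add: left_deriv_is_def)
    show "\<forall>\<^sub>F s in at_left t. (p s - p t) / (s - t) \<le> dp0"
      using eventually_at_left_real[OF t]
    proof (rule eventually_mono)
      fix s assume s: "s \<in> {0<..<t}"
      have "(p t - p s) / (t - s) \<le> (p s - p 0) / (s - 0)"
        using slope_conc(1)[OF conc, of 0 s t] s by auto
      also have "\<dots> \<le> dp0" using sl s by auto
      finally have "(p t - p s) / (t - s) \<le> dp0" .
      moreover have "(p s - p t) / (s - t) = (p t - p s) / (t - s)"
        by (rule swapq)
      ultimately show "(p s - p t) / (s - t) \<le> dp0" by simp
    qed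
    show "\<not> trivial_limit (at_left t)" by simp
  qed
  then show ?thesis using le \<open>0 \<le> dr\<close> by linarith
qed

lemma aux_real:
  fixes a h w :: real
  assumes "0 \<le> w" "w \<le> 1"
  shows "\<bar>a + h\<bar> - \<bar>a\<bar> - sgn a * w * h \<ge> - \<bar>h\<bar>"
proof -
  have s: "\<bar>a + h\<bar> - \<bar>a\<bar> \<ge> sgn a * h"
    by (cases "a > 0"; cases "a < 0") (auto simp: abs_if)
  have "\<bar>sgn a * (1 - w) * h\<bar> \<le> \<bar>h\<bar>"
  proof -
    have "\<bar>sgn a * (1 - w) * h\<bar> = \<bar>sgn a\<bar> * (1 - w) * \<bar>h\<bar>"
      using assms by (simp add: abs_mult)
    also have "\<dots> \<le> 1 * 1 * \<bar>h\<bar>"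
      by (intro mult_right_mono mult_mono) (use assms in \<open>auto simp: abs_sgn_eq\<close>)
    finally show ?thesis by simp
  qed
  then have "sgn a * (1 - w) * h \<ge> - \<bar>h\<bar>" by linarith
  moreover have "sgn a * (1 - w) * h = sgn a * h - sgn a * w * h" by (simp add: algebra_simps)
  ultimately show ?thesis using s by linarith
qed

lemma nsp:
  fixes A :: "real ^ 'n ^ 'm" and h :: "real ^ 'n"
  assumes BP: "\<forall>xb. supported_on xb T \<longrightarrow> is_unique_argmin l1norm A (A *v xb) xb"
    and Ah: "A *v h = 0" and hne: "h \<noteq> 0"
  shows "(\<Sum>i\<in>UNIV. if i \<in> T then \<bar>h$i\<bar> else 0) < (\<Sum>i\<in>UNIV. if i \<in> T then 0 else \<bar>h$i\<bar>)"
proof -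
  define u where "u = (\<chi> i. if i \<in> T then - h$i else 0)"
  define v where "v = (\<chi> i. if i \<in> T then 0 else h$i)"
  have huv: "h = v - u" by (auto simp: u_def v_def vec_eq_iff)
  have Av: "A *v v = A *v u" using Ah huv
    by (metis eq_iff_diff_eq_0 matrix_vector_mult_diff_distrib)
  have su: "supported_on u T" by (auto simp: supported_on_def u_def)
  from BP su have U: "is_unique_argmin l1norm A (A *v u) u" by auto
  have l1u: "l1norm u = (\<Sum>i\<in>UNIV. if i \<in> T then \<bar>h$i\<bar> else 0)"
    unfolding l1norm_def u_def by (intro sum.cong) auto
  have l1v: "l1norm v = (\<Sum>i\<in>UNIV. if i \<in> T then 0 else \<bar>h$i\<bar>)"
    unfolding l1norm_def v_def by (intro sum.cong) auto
  have le: "l1norm u \<le> l1norm v" using U Av by (auto simp: is_unique_argmin_def is_argmin_def)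
  have ne: "l1norm u \<noteq> l1norm v"
  proof
    assume eq: "l1norm u = l1norm v"
    then have "is_argmin l1norm A (A *v u) v" using U Av
      by (auto simp: is_unique_argmin_def is_argmin_def)
    hence "v = u" using U by (auto simp: is_unique_argmin_def)
    hence "h = 0" using huv by simp
    with hne show False by simp
  qed
  show ?thesis using le ne l1u l1v by linarith
qed

lemma mainlem:
  fixes A :: "real ^ 'n ^ 'm" and R xb :: "real ^ 'n"
  assumes BP: "\<forall>xb. supported_on xb T \<longrightarrow> is_unique_argmin l1norm A (A *v xb) xb"
    and supp: "supported_on xb T"
    and Rw: "\<forall>i. \<exists>w. 0 \<le> w \<and> w \<le> 1 \<and> R$i = sgn (xb$i) * w"
  shows "is_unique_argmin (\<lambda>x. l1norm x - R \<bullet> x) A (A *v xb) xb"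
proof -
  have strict: "l1norm xb - R \<bullet> xb < l1norm x - R \<bullet> x" if x: "A *v x = A *v xb" "x \<noteq> xb" for x
  proof -
    define h where "h = x - xb"
    have Ah: "A *v h = 0" using x by (simp add: h_def matrix_vector_mult_diff_distrib)
    have hne: "h \<noteq> 0" using x by (simp add: h_def)
    note N = nsp[OF BP Ah hne]
    have tm: "\<bar>x$i\<bar> - \<bar>xb$i\<bar> - R$i * h$i \<ge> (if i \<in> T then - \<bar>h$i\<bar> else \<bar>h$i\<bar>)" for i
    proof (cases "i \<in> T")
      case False
      then have "xb$i = 0" using supp by (auto simp: supported_on_def)
      moreover obtain w where "R$i = sgn (xb$i) * w" using Rw by blast
      ultimately show ?thesis using False by (simp add: h_def)
    next
      case True
      obtain w where w: "0 \<le> w" "w \<le> 1" "R$i = sgn (xb$i) * w" using Rw by blast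
      have "x$i = xb$i + h$i" by (simp add: h_def)
      then show ?thesis using True aux_real[OF w(1,2), where a="xb$i" and h="h$i"] w(3)
        by (simp add: mult.assoc)
    qed
    have "(l1norm x - R \<bullet> x) - (l1norm xb - R \<bullet> xb)
        = (\<Sum>i\<in>UNIV. \<bar>x$i\<bar> - \<bar>xb$i\<bar> - R$i * h$i)"
      by (simp add: l1norm_def inner_vec_def h_def right_diff_distrib sum_subtractf)
    moreover have "(\<Sum>i\<in>UNIV. \<bar>x$i\<bar> - \<bar>xb$i\<bar> - R$i * h$i) \<ge> (\<Sum>i\<in>UNIV. if i \<in> T then - \<bar>h$i\<bar> else \<bar>h$i\<bar>)"
      by (rule sum_mono) (use tm in auto)
    moreover have "(\<Sum>i\<in>UNIV. if i \<in> T then - \<bar>h$i\<bar> else \<bar>h$i\<bar>)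
       = (\<Sum>i\<in>UNIV. if i \<in> T then 0 else \<bar>h$i\<bar>) - (\<Sum>i\<in>UNIV. if i \<in> T then \<bar>h$i\<bar> else 0)"
      by (simp add: sum_subtractf[symmetric]) (intro sum.cong, auto)
    ultimately show ?thesis using N by linarith
  qed
  show ?thesis
    unfolding is_unique_argmin_def is_argmin_def
  proof (intro conjI allI impI)
    show "A *v xb = A *v xb" by simp
  next
    fix x assume x: "A *v x = A *v xb"
    show "l1norm xb - R \<bullet> xb \<le> l1norm x - R \<bullet> x"
    proof (cases "x = xb")
      case True then show ?thesis by simp
    next
      case False then show ?thesis using strict[OF x] by simp
    qed
  next
    fix z assume z: "A *v z = A *v xb \<and> (\<forall>x. A *v x = A *v xb \<longrightarrow>
        l1norm z - R \<bullet> z \<le> l1norm x - R \<bullet> x)"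
    show "z = xb"
    proof (rule ccontr)
      assume "z \<noteq> xb"
      with z have "l1norm xb - R \<bullet> xb < l1norm z - R \<bullet> z" using strict by blast
      moreover have "l1norm z - R \<bullet> z \<le> l1norm xb - R \<bullet> xb" using z by blast
      ultimately show False by simp
    qed
  qed
qed

theorem theorem4p1:
  fixes A :: "real ^ 'n ^ 'm" and p :: "real \<Rightarrow> real" and dp0 :: real and T :: "'n set"
  assumes conc: "concave_on {0..} p"
    and incr: "mono_on {0..} p"
    and cont: "continuous_on {0..} p"
    and dp0: "right_deriv_is p 0 dp0"
    and dp0_pos: "dp0 > 0"
    and BP: "\<forall>xb. supported_on xb T \<longrightarrow> is_unique_argmin l1norm A (A *v xb) xb"
  shows "\<forall>xb xs. supported_on xb T \<longrightarrow> xs 0 = 0 \<longrightarrow>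
           (\<forall>k. \<exists>d. admissible_d p dp0 (xs k) d \<and>
                  is_argmin (\<lambda>x. l1norm x - Rvec dp0 (xs k) d \<bullet> x) A (A *v xb) (xs (Suc k))) \<longrightarrow>
           (\<forall>k. \<forall>d. admissible_d p dp0 (xs k) d \<longrightarrow>
                  is_unique_argmin (\<lambda>x. l1norm x - Rvec dp0 (xs k) d \<bullet> x) A (A *v xb) xb)
           \<and> (\<forall>k\<ge>1. xs k = xb)"
proof (intro allI impI)
  fix xb and xs :: "nat \<Rightarrow> real ^ 'n"
  assume supp: "supported_on xb T" and x0: "xs 0 = 0"
    and step: "\<forall>k. \<exists>d. admissible_d p dp0 (xs k) d \<and>
                  is_argmin (\<lambda>x. l1norm x - Rvec dp0 (xs k) d \<bullet> x) A (A *v xb) (xs (Suc k))"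
  have key: "is_unique_argmin (\<lambda>x. l1norm x - Rvec dp0 v d \<bullet> x) A (A *v xb) xb"
    if v: "v = 0 \<or> v = xb" and ad: "admissible_d p dp0 v d" for v d
  proof (rule mainlem[OF BP supp], intro allI)
    fix i
    show "\<exists>w. 0 \<le> w \<and> w \<le> 1 \<and> Rvec dp0 v d $ i = sgn (xb $ i) * w"
    proof (cases "v = 0")
      case True
      then show ?thesis by (intro exI[of _ 0]) (simp add: Rvec_def)
    next
      case False
      then have vx: "v = xb" using v by simp
      show ?thesis
      proof (cases "xb$i = 0")
        case True
        then show ?thesis using vx by (intro exI[of _ 0]) (simp add: Rvec_def)
      next
        case False
        then have "in_superdiff p \<bar>xb$i\<bar> (d$i)" using ad vx by (auto simp: admissible_d_def)
        from dbound[OF conc incr dp0 _ this] False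
        have "0 \<le> d$i \<and> d$i \<le> dp0" by simp
        then show ?thesis using vx dp0_pos
          by (intro exI[of _ "1 - d$i/dp0"]) (simp add: Rvec_def field_simps)
      qed
    qed
  qed
  have inv: "xs k = 0 \<or> xs k = xb" for k
  proof (induction k)
    case 0 then show ?case using x0 by simp
  next
    case (Suc k)
    obtain d where ad: "admissible_d p dp0 (xs k) d"
      and am: "is_argmin (\<lambda>x. l1norm x - Rvec dp0 (xs k) d \<bullet> x) A (A *v xb) (xs (Suc k))"
      using step by blast
    from key[OF Suc ad] am show ?case by (auto simp: is_unique_argmin_def)
  qed
  have succ: "xs (Suc k) = xb" for k
  proof -
    obtain d where ad: "admissible_d p dp0 (xs k) d"
      and am: "is_argmin (\<lambda>x. l1norm x - Rvec dp0 (xs k) d \<bullet> x) A (A *v xb) (xs (Suc k))"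
      using step by blast
    from key[OF inv ad] am show ?thesis by (auto simp: is_unique_argmin_def)
  qed
  show "(\<forall>k d. admissible_d p dp0 (xs k) d \<longrightarrow>
          is_unique_argmin (\<lambda>x. l1norm x - Rvec dp0 (xs k) d \<bullet> x) A (A *v xb) xb)
        \<and> (\<forall>k\<ge>1. xs k = xb)"
  proof (intro conjI allI impI)
    fix k d assume "admissible_d p dp0 (xs k) d"
    then show "is_unique_argmin (\<lambda>x. l1norm x - Rvec dp0 (xs k) d \<bullet> x) A (A *v xb) xb"
      by (rule key[OF inv])
  next
    fix k :: nat assume "1 \<le> k"
    then obtain j where "k = Suc j" by (cases k) auto
    then show "xs k = xb" using succ by simp
  qed
qed

end
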